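(* Let $G=\mathbb Z$ with the discrete topology, $Y=(0,\infty)\subset\mathbb R$, and let $\theta$ be the partial action of $\mathbb Z$ on $Y$ with $Y_n=(\max\{0,n\},\infty)$ and $\theta_n\colon Y_{-n}\to Y_n$, $y\mapsto n+y$. Then the enveloping space $Y_G$ of $\theta$ is $G$-homeomorphic to $\mathbb R$ endowed with the global action $\mathbb Z\times\mathbb R\to\mathbb R$, $(n,t)\mapsto n+t$.
   Context: The enveloping space is $Y_G=(G\times Y)/R$ with the quotient topology, where $(n,y)R(m,z)$ iff $y\in Y_{m-n}$ and $\theta_{n-m}(y)=z$, with the global action $k\cdot[n,y]=[k+n,y]$. A $G$-homeomorphism is a homeomorphism $f$ with $f(k\cdot x)=k\cdot f(x)$ for all $k,x$. *)

theory Defs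
  imports "HOL-Analysis.Analysis"
begin

definition quotient_topology :: "'a topology \<Rightarrow> ('a \<Rightarrow> 'b) \<Rightarrow> 'b topology" where
  "quotient_topology X p =
     topology (\<lambda>U. U \<subseteq> p ` topspace X \<and> openin X {x \<in> topspace X. p x \<in> U})"

text \<open>General enveloping space of a partial action of Z: Y the space (with topology TY),
  Yd n the domain Y_n, th n the map theta_n : Y_(-n) -> Y_n.\<close>

definition env_rel :: "(int \<Rightarrow> 'y set) \<Rightarrow> (int \<Rightarrow> 'y \<Rightarrow> 'y) \<Rightarrow> ((int \<times> 'y) \<times> (int \<times> 'y)) set" where
  "env_rel Yd th = {((n, y), (m, z)). y \<in> Yd (m - n) \<and> th (n - m) y = z}"

definition env_class :: "(int \<Rightarrow> 'y set) \<Rightarrow> (int \<Rightarrow> 'y \<Rightarrow> 'y) \<Rightarrow> int \<times> 'y \<Rightarrow> (int \<times> 'y) set" where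
  "env_class Yd th p = env_rel Yd th `` {p}"

definition env_space :: "'y topology \<Rightarrow> (int \<Rightarrow> 'y set) \<Rightarrow> (int \<Rightarrow> 'y \<Rightarrow> 'y) \<Rightarrow> (int \<times> 'y) set topology" where
  "env_space TY Yd th = quotient_topology (prod_topology (discrete_topology UNIV) TY) (env_class Yd th)"

definition env_act :: "int \<Rightarrow> (int \<times> 'y) set \<Rightarrow> (int \<times> 'y) set" where
  "env_act k c = (\<lambda>(n, y). (k + n, y)) ` c"

definition Yex :: "real set" where "Yex = {0<..}"
definition Yex_dom :: "int \<Rightarrow> real set" where "Yex_dom n = {max 0 (real_of_int n)<..}"
definition thex :: "int \<Rightarrow> real \<Rightarrow> real" where "thex n y = real_of_int n + y"

end

theory Submission
  imports Defs
begin

lemma quot_istop: "istopology (\<lambda>U. U \<subseteq> p ` topspace X \<and> openin X {x \<in> topspace X. p x \<in> U})" (is "istopology ?L")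
proof -
  have i: "{x \<in> topspace X. p x \<in> S \<inter> T} = {x \<in> topspace X. p x \<in> S} \<inter> {x \<in> topspace X. p x \<in> T}" for S T
    by auto
  have u: "{x \<in> topspace X. p x \<in> \<Union>K} = \<Union>((\<lambda>U. {x \<in> topspace X. p x \<in> U}) ` K)" for K
    by auto
  have 1: "\<forall>S T. ?L S \<longrightarrow> ?L T \<longrightarrow> ?L (S \<inter> T)"
  proof (intro allI impI)
    fix S T assume "?L S" "?L T"
    thus "?L (S \<inter> T)" by (simp only: i) (blast intro: openin_Int)
  qed
  have 2: "\<forall>K. (\<forall>U\<in>K. ?L U) \<longrightarrow> ?L (\<Union>K)"
  proof (intro allI impI)
    fix K assume "\<forall>U\<in>K. ?L U"
    thus "?L (\<Union>K)" by (simp only: u) (blast intro: openin_Union)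
  qed
  show ?thesis unfolding istopology_def using 1 2 by blast
qed

lemma openin_quot: "openin (quotient_topology X p) U \<longleftrightarrow> U \<subseteq> p ` topspace X \<and> openin X {x \<in> topspace X. p x \<in> U}"
  unfolding quotient_topology_def by (simp add: topology_inverse'[OF quot_istop])

lemma topspace_quot: "topspace (quotient_topology X p) = p ` topspace X"
proof -
  have "openin (quotient_topology X p) (p ` topspace X)"
    unfolding openin_quot by (auto intro: openin_subopen[THEN iffD2])
  moreover have "topspace (quotient_topology X p) \<subseteq> p ` topspace X"
    unfolding topspace_def openin_quot by blast
  ultimately show ?thesis using openin_subset by blast
qed

abbreviation "XX \<equiv> prod_topology (discrete_topology (UNIV::int set)) (subtopology euclideanreal Yex)"
abbreviation "qq \<equiv> env_class Yex_dom thex"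

lemma topX: "topspace XX = UNIV \<times> {0<..}"
  by (simp add: Yex_def)

lemma cls: "y > 0 \<Longrightarrow> qq (n, y) = {(m, z). real_of_int m < real_of_int n + y \<and> z = real_of_int n + y - real_of_int m}"
  unfolding env_class_def env_rel_def Yex_dom_def thex_def by (auto simp: max_def split: if_splits)

definition ff :: "(int \<times> real) set \<Rightarrow> real" where
  "ff c = (let p = (SOME p. p \<in> c) in real_of_int (fst p) + snd p)"

lemma ff_cls: assumes yp: "y > 0" shows "ff (qq (n, y)) = real_of_int n + y"
proof -
  have c: "qq (n, y) = {(m, z). real_of_int m < real_of_int n + y \<and> z = real_of_int n + y - real_of_int m}"
    using cls[of y n] yp by blast
  have "(n, y) \<in> qq (n, y)" unfolding c using yp by simp
  hence "(SOME p. p \<in> qq (n, y)) \<in> qq (n, y)" by (rule someI)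
  moreover define p where "p = (SOME p. p \<in> qq (n, y))"
  ultimately have "p \<in> qq (n, y)" by simp
  hence "snd p = real_of_int n + y - real_of_int (fst p)" unfolding c by (cases p) auto
  thus ?thesis unfolding ff_def Let_def p_def[symmetric] by simp
qed

lemma ff_q: "x \<in> topspace XX \<Longrightarrow> ff (qq x) = real_of_int (fst x) + snd x"
  using ff_cls by (auto simp: Yex_def)

lemma contg: "continuous_map XX euclideanreal (\<lambda>x. real_of_int (fst x) + snd x)"
proof (intro continuous_map_add)
  show "continuous_map XX euclideanreal (\<lambda>x. real_of_int (fst x))"
  proof -
    have "continuous_map (discrete_topology UNIV) euclideanreal real_of_int" by simp
    from continuous_map_compose[OF continuous_map_fst this] show ?thesis by (simp add: o_def)
  qed
  show "continuous_map XX euclideanreal snd"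
  proof -
    have "continuous_map (subtopology euclideanreal Yex) euclideanreal id"
      by (rule continuous_map_from_subtopology) simp
    from continuous_map_compose[OF continuous_map_snd this] show ?thesis by (simp add: o_def)
  qed
qed

theorem proposition3p12:
  shows "\<exists>f. homeomorphic_map (env_space (subtopology euclideanreal Yex) Yex_dom thex) euclideanreal f \<and>
     (\<forall>k x. x \<in> topspace (env_space (subtopology euclideanreal Yex) Yex_dom thex) \<longrightarrow>
        f (env_act k x) = real_of_int k + f x)"
proof (intro exI conjI allI impI)
  let ?Q = "env_space (subtopology euclideanreal Yex) Yex_dom thex"
  have Qeq: "?Q = quotient_topology XX qq" by (simp add: env_space_def)
  have topQ: "topspace ?Q = qq ` topspace XX" by (simp add: Qeq topspace_quot)
  show "homeomorphic_map ?Q euclideanreal ff"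
  proof (rule bijective_open_imp_homeomorphic_map)
    show "continuous_map ?Q euclideanreal ff"
      unfolding continuous_map_def
    proof (intro conjI allI impI)
      show "ff \<in> topspace ?Q \<rightarrow> topspace euclideanreal" by simp
      fix U :: "real set" assume U: "openin euclideanreal U"
      have "{x \<in> topspace XX. qq x \<in> {c \<in> topspace ?Q. ff c \<in> U}} = {x \<in> topspace XX. real_of_int (fst x) + snd x \<in> U}"
        using ff_q topQ by auto
      moreover have "openin XX {x \<in> topspace XX. real_of_int (fst x) + snd x \<in> U}"
        using contg U by (simp add: continuous_map_def)
      ultimately show "openin ?Q {c \<in> topspace ?Q. ff c \<in> U}"
        unfolding Qeq openin_quot using topQ Qeq by auto
    qed
    show "open_map ?Q euclideanreal ff"
      unfolding open_map_def
    proof (intro allI impI)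
      fix U assume "openin ?Q U"
      hence Usub: "U \<subseteq> qq ` topspace XX" and W: "openin XX {x \<in> topspace XX. qq x \<in> U}"
        unfolding Qeq openin_quot by auto
      define W where "W = {x \<in> topspace XX. qq x \<in> U}"
      define S where "S n = {y. (n, y) \<in> W}" for n
      have Sopen: "open (S n)" for n
      proof -
        have cm: "continuous_map (subtopology euclideanreal Yex) XX (\<lambda>y. (n, y))"
          using continuous_map_id[unfolded id_def] by (intro continuous_map_pairedI) simp_all
        have "openin (subtopology euclideanreal Yex) {y \<in> topspace (subtopology euclideanreal Yex). (n, y) \<in> W}"
          using cm W unfolding W_def continuous_map_def by blast
        moreover have "{y \<in> topspace (subtopology euclideanreal Yex). (n, y) \<in> W} = S n"
          unfolding S_def W_def using topX by auto
        ultimately show ?thesis using openin_open_trans[of "{0<..}" "S n"] by (simp add: Yex_def)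
      qed
      have "ff ` U = (\<Union>n. (\<lambda>y. real_of_int n + y) ` S n)"
      proof
        show "ff ` U \<subseteq> (\<Union>n. (\<lambda>y. real_of_int n + y) ` S n)"
        proof
          fix t assume "t \<in> ff ` U"
          then obtain x where x: "x \<in> topspace XX" "qq x \<in> U" "t = ff (qq x)" using Usub by blast
          then show "t \<in> (\<Union>n. (\<lambda>y. real_of_int n + y) ` S n)"
            using ff_q[OF x(1)] unfolding S_def W_def by (cases x) auto
        qed
        show "(\<Union>n. (\<lambda>y. real_of_int n + y) ` S n) \<subseteq> ff ` U"
        proof
          fix t assume "t \<in> (\<Union>n. (\<lambda>y. real_of_int n + y) ` S n)"
          then obtain n y where "(n, y) \<in> W" "t = real_of_int n + y" unfolding S_def by blast
          then have "(n, y) \<in> topspace XX" "qq (n, y) \<in> U" "t = ff (qq (n, y))"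
            unfolding W_def using ff_q by auto
          then show "t \<in> ff ` U" by blast
        qed
      qed
      moreover have "open (\<Union>n. (\<lambda>y. real_of_int n + y) ` S n)"
        using Sopen open_translation by blast
      ultimately show "openin euclideanreal (ff ` U)" by simp
    qed
    show "ff ` topspace ?Q = topspace euclideanreal"
    proof -
      have "t \<in> ff ` topspace ?Q" for t
      proof -
        define n where "n = \<lceil>t\<rceil> - 1"
        have "t - real_of_int n > 0" unfolding n_def by linarith
        hence "(n, t - real_of_int n) \<in> topspace XX" by (simp add: Yex_def)
        moreover have "ff (qq (n, t - real_of_int n)) = t"
          using ff_cls[OF \<open>t - real_of_int n > 0\<close>] by simp
        ultimately show ?thesis using topQ by (metis image_eqI)
      qed
      thus ?thesis by auto
    qed
    show "inj_on ff (topspace ?Q)"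
    proof (rule inj_onI)
      fix a b assume "a \<in> topspace ?Q" "b \<in> topspace ?Q" and e: "ff a = ff b"
      then obtain n y m z where "y > 0" "z > 0" "a = qq (n, y)" "b = qq (m, z)"
        using topQ topX by auto
      thus "a = b" using e ff_cls cls by simp
    qed
  qed
  fix k x assume "x \<in> topspace ?Q"
  then obtain n y where y: "y > 0" "x = qq (n, y)" using topQ topX by auto
  have "env_act k x = qq (k + n, y)"
    unfolding y(2) env_act_def cls[OF y(1)]
    apply (auto simp: image_iff)
    subgoal for a by (rule exI[of _ "a - k"]) auto
    done
  thus "ff (env_act k x) = real_of_int k + ff x"
    using ff_cls[OF y(1)] ff_cls[OF y(1), of "k+n"] y by simp
qed

end
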